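(* Let $m$ range over even integers tending to infinity, with $N=N(m)$, $n=n(m)$ positive integers satisfying $N=o(m)$ and $n=o(m)$, and fix $0<\varepsilon\le1$. Let $\bar J_2=5$. Then, uniformly over all $\omega\in K_m$ and all $x,y\in[m]^N$, $$\log\frac{\Pr_{(u,q^\omega,u)}\big(\{X=x,Y=y\}\cap B\big)}{\Pr_{(u,q^\omega,u)}\{X=x,Y=y\}}\ \ge\ -\bar J_2\,\frac{Nn+n^2}{m}\,(1+o(1)),$$ $$\log\frac{\Pr_{(u,q^\omega,q^\omega)}\big(\{X=x,Y=y\}\cap B\big)}{\Pr_{(u,q^\omega,q^\omega)}\{X=x,Y=y\}}\ \ge\ -\bar J_2\,\frac{Nn+n^2}{m}\,(1+o(1)),$$ where $B$ is the event that no symbol appears more than once in $Z$ and no symbol of $Z$ appears in $X$ or in $Y$.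
   Context: Let $u$ be the uniform distribution on $[m]=\{1,\dots,m\}$. Let $K_m$ be the collection of all subsets of $[m]$ of cardinality $m/2$. For $\omega\in K_m$ let $q^\omega$ be the distribution on $[m]$ with $q^\omega_j=(1+\varepsilon)/m$ for $j\in\omega$ and $q^\omega_j=(1-\varepsilon)/m$ for $j\notin\omega$. For distributions $a,b,c$ on $[m]$, $\Pr_{(a,b,c)}$ denotes the probability when $X=(X_1,\dots,X_N)$ is i.i.d. with marginal $a$, $Y=(Y_1,\dots,Y_N)$ is i.i.d. with marginal $b$, $Z=(Z_1,\dots,Z_n)$ is i.i.d. with marginal $c$, and $X,Y,Z$ are independent. *)

theory Defs
  imports Complex_Main
begin

text \<open>Distributions on [m] = {1..m} are represented as functions nat => real
(only their values on {1..m} matter).\<close>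

definition unif :: "nat \<Rightarrow> nat \<Rightarrow> real" where
  "unif m j = 1 / real m"

definition qdist :: "nat \<Rightarrow> real \<Rightarrow> nat set \<Rightarrow> nat \<Rightarrow> real" where
  "qdist m \<epsilon> \<omega> j = (if j \<in> \<omega> then (1 + \<epsilon>) / real m else (1 - \<epsilon>) / real m)"

definition Kset :: "nat \<Rightarrow> nat set set" where
  "Kset m = {\<omega>. \<omega> \<subseteq> {1..m} \<and> card \<omega> = m div 2}"

definition seqs :: "nat \<Rightarrow> nat \<Rightarrow> nat list set" where
  "seqs m k = {xs. length xs = k \<and> set xs \<subseteq> {1..m}}"

text \<open>Probability of an event E(X,Y,Z) when X (length N) is i.i.d. a, Y (length N)
is i.i.d. b, Z (length n) is i.i.d. c, all independent.\<close>
definition Prob3 :: "nat \<Rightarrow> nat \<Rightarrow> nat \<Rightarrow> (nat \<Rightarrow> real) \<Rightarrow> (nat \<Rightarrow> real) \<Rightarrow> (nat \<Rightarrow> real)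
    \<Rightarrow> (nat list \<Rightarrow> nat list \<Rightarrow> nat list \<Rightarrow> bool) \<Rightarrow> real" where
  "Prob3 m N n a b c E =
     (\<Sum>(x, y, z) \<in> {(x, y, z). x \<in> seqs m N \<and> y \<in> seqs m N \<and> z \<in> seqs m n \<and> E x y z}.
        prod_list (map a x) * prod_list (map b y) * prod_list (map c z))"

definition eventB :: "nat list \<Rightarrow> nat list \<Rightarrow> nat list \<Rightarrow> bool" where
  "eventB x y z \<longleftrightarrow> distinct z \<and> set z \<inter> (set x \<union> set y) = {}"

end

theory Submission
  imports Defs
begin

lemma seqs_finite: "finite (seqs m n)"
  unfolding seqs_def using finite_lists_length_eq[of "{1..m}" n] by (simp add: conj_commute)

lemma seqs_0: "seqs m 0 = {[]}"
  unfolding seqs_def by auto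

lemma seqs_Suc: "seqs m (Suc n) = (\<lambda>(a,z). a#z) ` ({1..m} \<times> seqs m n)"
  unfolding seqs_def by (force simp: length_Suc_conv)

lemma sum_seqs_Suc: "(\<Sum>z\<in>seqs m (Suc n). f z) = (\<Sum>a\<in>{1..m}. \<Sum>z\<in>seqs m n. f (a#z))"
proof -
  have "inj_on (\<lambda>(a,z). a#z) ({1..m} \<times> seqs m n)" by (auto simp: inj_on_def)
  then have "(\<Sum>z\<in>seqs m (Suc n). f z) = (\<Sum>x\<in>{1..m} \<times> seqs m n. f ((\<lambda>(a,z). a#z) x))"
    unfolding seqs_Suc by (rule sum.reindex_cong) auto
  also have "\<dots> = (\<Sum>a\<in>{1..m}. \<Sum>z\<in>seqs m n. f (a#z))"
    by (simp add: sum.cartesian_product split_def)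
  finally show ?thesis .
qed

lemma seqs_total: "(\<Sum>z\<in>seqs m n. prod_list (map (c :: nat \<Rightarrow> real) z)) = (\<Sum>j\<in>{1..m}. c j) ^ n"
proof (induction n)
  case 0 then show ?case by (simp add: seqs_0)
next
  case (Suc n)
  have "(\<Sum>z\<in>seqs m (Suc n). prod_list (map c z)) = (\<Sum>a\<in>{1..m}. c a * (\<Sum>z\<in>seqs m n. prod_list (map c z)))"
  proof -
    have d: "(\<Sum>z\<in>seqs m n. c a * prod_list (map c z)) = c a * (\<Sum>z\<in>seqs m n. prod_list (map c z))" for a
      by (rule sum_distrib_left[symmetric])
    show ?thesis unfolding sum_seqs_Suc by (simp add: d)
  qed
  also have "\<dots> = (\<Sum>a\<in>{1..m}. c a) * (\<Sum>j\<in>{1..m}. c j) ^ n" 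
    by (simp only: Suc.IH sum_distrib_right)
  also have "\<dots> = (\<Sum>j\<in>{1..m}. c j) ^ Suc n" by simp
  finally show ?case .
qed

definition G :: "nat \<Rightarrow> (nat \<Rightarrow> real) \<Rightarrow> nat \<Rightarrow> nat set \<Rightarrow> real" where
  "G m c n S = (\<Sum>z\<in>seqs m n. if distinct z \<and> set z \<inter> S = {} then prod_list (map c z) else 0)"

lemma G_0: "G m c 0 S = 1" by (simp add: G_def seqs_0)

lemma G_Suc: "G m c (Suc n) S = (\<Sum>a\<in>{1..m}. if a \<notin> S then c a * G m c n (insert a S) else 0)"
  unfolding G_def sum_seqs_Suc
proof (rule sum.cong[OF refl])
  fix a
  show "(\<Sum>z\<in>seqs m n. if distinct (a # z) \<and> set (a # z) \<inter> S = {} then prod_list (map c (a # z)) else 0) =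
        (if a \<notin> S then c a * (\<Sum>z\<in>seqs m n. if distinct z \<and> set z \<inter> insert a S = {} then prod_list (map c z) else 0) else 0)"
    by (cases "a \<in> S") (auto simp: sum_distrib_left intro!: sum.cong)
qed

definition Pl :: "real \<Rightarrow> real \<Rightarrow> nat \<Rightarrow> nat \<Rightarrow> real" where
  "Pl T b n k = (\<Prod>i<n. max 0 (T - b * real (k + i)))"

lemma Pl_nonneg: "Pl T b n k \<ge> 0"
  unfolding Pl_def by (rule prod_nonneg) auto

lemma G_lower:
  assumes c: "\<And>j. j \<in> {1..m} \<Longrightarrow> 0 \<le> c j \<and> c j \<le> b" and b: "0 \<le> b" and S: "finite S"
  shows "G m c n S \<ge> Pl (\<Sum>j\<in>{1..m}. c j) b n (card S)"
  using S
proof (induction n arbitrary: S)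
  case 0 then show ?case by (simp add: G_0 Pl_def)
next
  case (Suc n)
  define T where "T = (\<Sum>j\<in>{1..m}. c j)"
  define k where "k = card S"
  have "G m c (Suc n) S = (\<Sum>a\<in>{1..m}. if a \<notin> S then c a * G m c n (insert a S) else 0)"
    by (rule G_Suc)
  also have "\<dots> \<ge> (\<Sum>a\<in>{1..m}. if a \<notin> S then c a * Pl T b n (Suc k) else 0)"
  proof (rule sum_mono)
    fix a assume a: "a \<in> {1..m}"
    show "(if a \<notin> S then c a * Pl T b n (Suc k) else 0) \<le> (if a \<notin> S then c a * G m c n (insert a S) else 0)"
    proof (cases "a \<in> S")
      case False
      have "card (insert a S) = Suc k" using False Suc.prems k_def by simp
      then have "Pl T b n (Suc k) \<le> G m c n (insert a S)" using Suc.IH[of "insert a S"] Suc.prems T_def by simp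
      then show ?thesis using False c[OF a] by (simp add: mult_left_mono)
    qed simp
  qed
  also have "(\<Sum>a\<in>{1..m}. if a \<notin> S then c a * Pl T b n (Suc k) else 0) = Pl T b n (Suc k) * (\<Sum>a\<in>{1..m} - S. c a)"
  proof -
    have e: "{a. a \<notin> S} = -S" by auto
    show ?thesis by (simp add: sum.If_cases sum_distrib_left Diff_eq mult.commute e)
  qed
  finally have 1: "G m c (Suc n) S \<ge> Pl T b n (Suc k) * (\<Sum>a\<in>{1..m} - S. c a)" .
  have h: "{1..m} - {1..m} \<inter> S = {1..m} - S" by auto
  have e1: "T = sum c ({1..m} - S) + sum c ({1..m} \<inter> S)"
    unfolding T_def by (metis h finite_atLeastAtMost inf_le1 sum.subset_diff)
  have e2: "(\<Sum>a\<in>{1..m} \<inter> S. c a) \<le> (\<Sum>a\<in>{1..m} \<inter> S. b)" using c by (intro sum_mono) auto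
  have e3: "(\<Sum>a\<in>{1..m} \<inter> S. b) = b * card ({1..m} \<inter> S)" by simp
  have e4: "b * card ({1..m} \<inter> S) \<le> b * k" unfolding k_def using Suc.prems b
    by (intro mult_left_mono) (auto intro: card_mono)
  have e5: "sum c ({1..m} - S) \<ge> 0" using c by (intro sum_nonneg) auto
  have 2: "(\<Sum>a\<in>{1..m} - S. c a) \<ge> max 0 (T - b * real (k + 0))"
    using e1 e2 e3 e4 e5 by (simp add: mult.commute)
  have "Pl T b (Suc n) k = max 0 (T - b * real (k + 0)) * Pl T b n (Suc k)"
    unfolding Pl_def prod.lessThan_Suc_shift by (simp add: add.assoc)
  also have "\<dots> \<le> (\<Sum>a\<in>{1..m} - S. c a) * Pl T b n (Suc k)"
    using 2 Pl_nonneg by (intro mult_right_mono) auto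
  finally show ?case using 1 T_def k_def by (simp add: mult.commute)
qed


lemma Prob3_fix:
  assumes x: "x \<in> seqs m N" and y: "y \<in> seqs m N"
    and E: "\<And>x' y' z. E x' y' z = (x' = x \<and> y' = y \<and> P z)"
  shows "Prob3 m N n a b c E = prod_list (map a x) * prod_list (map b y) *
           (\<Sum>z\<in>seqs m n. if P z then prod_list (map c z) else 0)"
proof -
  have st: "{(x', y', z). x' \<in> seqs m N \<and> y' \<in> seqs m N \<and> z \<in> seqs m n \<and> E x' y' z}
      = (\<lambda>z. (x,y,z)) ` {z \<in> seqs m n. P z}" using x y E by auto
  have "Prob3 m N n a b c E = (\<Sum>z\<in>{z \<in> seqs m n. P z}. prod_list (map a x) * prod_list (map b y) * prod_list (map c z))"
    unfolding Prob3_def st by (subst sum.reindex) (auto simp: inj_on_def)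
  also have "\<dots> = prod_list (map a x) * prod_list (map b y) * (\<Sum>z\<in>{z \<in> seqs m n. P z}. prod_list (map c z))"
    by (simp add: sum_distrib_left)
  also have "(\<Sum>z\<in>{z \<in> seqs m n. P z}. prod_list (map c z)) = (\<Sum>z\<in>seqs m n. if P z then prod_list (map c z) else 0)"
    by (rule sum.inter_filter[OF seqs_finite])
  finally show ?thesis .
qed

lemma ln_bound:
  fixes t :: real assumes "0 \<le> t" "t \<le> 1/5"
  shows "- (5/4) * t \<le> ln (1 - t)"
proof -
  have "ln (1/(1-t)) \<le> 1/(1-t) - 1" using assms by (intro ln_le_minus_one) simp
  moreover have "ln (1/(1-t)) = - ln (1-t)" using assms by (simp add: ln_div)
  moreover have "1/(1-t) - 1 \<le> (5/4) * t" using assms mult_left_mono[of "t*5" 1 t] by (simp add: field_simps)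
  ultimately show ?thesis by linarith
qed

lemma ratio_bound:
  assumes m: "0 < m" and c: "\<And>j. j \<in> {1..m} \<Longrightarrow> 0 \<le> c j \<and> c j \<le> 2 / real m"
    and T: "(\<Sum>j\<in>{1..m}. c j) = 1"
    and x: "x \<in> seqs m N" and y: "y \<in> seqs m N"
    and small: "10 * (2 * real N + real n) \<le> real m"
    and pos: "Prob3 m N n a b c (\<lambda>x' y' z. x' = x \<and> y' = y) > 0"
  shows "ln (Prob3 m N n a b c (\<lambda>x' y' z. x' = x \<and> y' = y \<and> eventB x' y' z)
            / Prob3 m N n a b c (\<lambda>x' y' z. x' = x \<and> y' = y))
         \<ge> - 5 * ((real N * real n + real n ^ 2) / real m)"
proof -
  define px where "px = prod_list (map a x) * prod_list (map b y)"
  define S where "S = set x \<union> set y"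
  have num: "Prob3 m N n a b c (\<lambda>x' y' z. x' = x \<and> y' = y \<and> eventB x' y' z) = px * G m c n S"
    unfolding px_def G_def S_def by (rule Prob3_fix[OF x y]) (auto simp add: eventB_def)
  have den: "Prob3 m N n a b c (\<lambda>x' y' z. x' = x \<and> y' = y) = px"
  proof -
    have "Prob3 m N n a b c (\<lambda>x' y' z. x' = x \<and> y' = y) = px * (\<Sum>z\<in>seqs m n. if True then prod_list (map c z) else 0)"
      unfolding px_def by (rule Prob3_fix[OF x y]) simp
    then show ?thesis using seqs_total[where m=m and n=n and c=c] T by simp
  qed
  have pxpos: "px > 0" using pos den by simp
  have ratio: "Prob3 m N n a b c (\<lambda>x' y' z. x' = x \<and> y' = y \<and> eventB x' y' z)
            / Prob3 m N n a b c (\<lambda>x' y' z. x' = x \<and> y' = y) = G m c n S"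
    using num den pxpos by simp
  define k where "k = card S"
  have lx: "length x = N" "length y = N" using x y by (auto simp: seqs_def)
  have "k \<le> card (set x) + card (set y)" unfolding k_def S_def by (rule card_Un_le)
  also have "\<dots> \<le> 2 * N" using card_length[of x] card_length[of y] lx by simp
  finally have k: "k \<le> 2 * N" .
  define bb :: real where "bb = 2 / real m"
  have b0: "0 \<le> bb" unfolding bb_def by simp
  define t where "t i = bb * real (k + i)" for i
  have tb: "0 \<le> t i \<and> t i \<le> 1/5" if "i < n" for i
  proof -
    have "real (k + i) \<le> 2 * real N + real n" using k that by linarith
    then have "t i \<le> bb * (2 * real N + real n)" unfolding t_def using b0 by (intro mult_left_mono) auto
    also have "\<dots> \<le> 1/5" unfolding bb_def using small m by (simp add: field_simps)
    finally show ?thesis unfolding t_def using b0 by simp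
  qed
  have Pl_eq: "Pl 1 bb n k = (\<Prod>i<n. 1 - t i)"
    unfolding Pl_def
  proof (intro prod.cong refl)
    fix i assume "i \<in> {..<n}"
    then have "t i \<le> 1/5" using tb by auto
    then show "max 0 (1 - bb * real (k + i)) = 1 - t i" unfolding t_def by simp
  qed
  have Ppos: "Pl 1 bb n k > 0" unfolding Pl_eq using tb by (intro prod_pos) force
  have G0: "Pl (\<Sum>j\<in>{1..m}. c j) bb n (card S) \<le> G m c n S"
  proof (rule G_lower)
    show "0 \<le> c j \<and> c j \<le> bb" if "j \<in> {1..m}" for j using c[OF that] unfolding bb_def by simp
    show "0 \<le> bb" by (rule b0)
    show "finite S" unfolding S_def by simp
  qed
  have G: "G m c n S \<ge> Pl 1 bb n k" using G0 T unfolding k_def by simp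
  have "ln (Pl 1 bb n k) = (\<Sum>i<n. ln (1 - t i))"
    unfolding Pl_eq using tb by (intro ln_prod) force+
  also have "\<dots> \<ge> (\<Sum>i<n. - (5/4) * (bb * (2 * real N + real n)))"
  proof (rule sum_mono)
    fix i assume "i \<in> {..<n}"
    then have i: "i < n" by simp
    have "real (k + i) \<le> 2 * real N + real n" using k i by linarith
    then have "t i \<le> bb * (2 * real N + real n)" unfolding t_def using b0 by (intro mult_left_mono) auto
    then show "- (5/4) * (bb * (2 * real N + real n)) \<le> ln (1 - t i)"
      using ln_bound[of "t i"] tb[OF i] by linarith
  qed
  finally have L: "ln (Pl 1 bb n k) \<ge> - (5/4) * real n * (bb * (2 * real N + real n))" by simp
  have "- 5 * ((real N * real n + real n ^ 2) / real m) \<le> - (5/4) * real n * (bb * (2 * real N + real n))"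
    unfolding bb_def using m by (simp add: field_simps power2_eq_square)
  also have "\<dots> \<le> ln (Pl 1 bb n k)" by (rule L)
  also have "\<dots> \<le> ln (G m c n S)" using Ppos G by simp
  finally show ?thesis unfolding ratio .
qed


lemma unif_total: "0 < m \<Longrightarrow> (\<Sum>j\<in>{1..m}. unif m j) = 1"
  by (simp add: unif_def)

lemma qdist_total:
  assumes "even m" "\<omega> \<in> Kset m" "0 < m"
  shows "(\<Sum>j\<in>{1..m}. qdist m \<epsilon> \<omega> j) = 1"
proof -
  have w: "\<omega> \<subseteq> {1..m}" "card \<omega> = m div 2" using assms(2) by (auto simp: Kset_def)
  have i1: "{1..m} \<inter> {j. j \<in> \<omega>} = \<omega>" using w by auto
  have i2: "{1..m} \<inter> - {j. j \<in> \<omega>} = {1..m} - \<omega>" by auto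
  have i3: "{1..m} \<inter> \<omega> = \<omega>" using w by auto
  have i4: "{1..m} \<inter> - \<omega> = {1..m} - \<omega>" by auto
  have c2: "card ({1..m} - \<omega>) = m - m div 2" using w by (simp add: card_Diff_subset finite_subset)
  obtain h where h: "m = 2 * h" using assms(1) by blast
  have "(\<Sum>j\<in>{1..m}. qdist m \<epsilon> \<omega> j) = card \<omega> * ((1 + \<epsilon>) / m) + card ({1..m} - \<omega>) * ((1 - \<epsilon>) / m)"
    unfolding qdist_def sum.If_cases[OF finite_atLeastAtMost] i1 i2 by simp
  also have "\<dots> = 1" using h w c2 assms(3)
    by (cases "h = 0") (auto simp: field_simps)
  finally show ?thesis .
qed

theorem lemma4:
  fixes N n :: "nat \<Rightarrow> nat" and \<epsilon> :: real
  assumes "0 < \<epsilon>" and "\<epsilon> \<le> 1"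
    and "\<And>m. N m > 0" and "\<And>m. n m > 0"
    and "(\<lambda>m. real (N m) / real m) \<longlonglongrightarrow> 0"
    and "(\<lambda>m. real (n m) / real m) \<longlonglongrightarrow> 0"
  shows "\<exists>\<delta> :: nat \<Rightarrow> real. \<delta> \<longlonglongrightarrow> 0 \<and>
    (\<forall>\<^sub>F m in sequentially. even m \<longrightarrow>
      (\<forall>\<omega> \<in> Kset m. \<forall>x \<in> seqs m (N m). \<forall>y \<in> seqs m (N m).
        (Prob3 m (N m) (n m) (unif m) (qdist m \<epsilon> \<omega>) (unif m)
            (\<lambda>x' y' z. x' = x \<and> y' = y) > 0 \<longrightarrow>
         ln (Prob3 m (N m) (n m) (unif m) (qdist m \<epsilon> \<omega>) (unif m)
               (\<lambda>x' y' z. x' = x \<and> y' = y \<and> eventB x' y' z)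
             / Prob3 m (N m) (n m) (unif m) (qdist m \<epsilon> \<omega>) (unif m)
               (\<lambda>x' y' z. x' = x \<and> y' = y))
         \<ge> - 5 * ((real (N m) * real (n m) + real (n m) ^ 2) / real m) * (1 + \<delta> m))
      \<and> (Prob3 m (N m) (n m) (unif m) (qdist m \<epsilon> \<omega>) (qdist m \<epsilon> \<omega>)
            (\<lambda>x' y' z. x' = x \<and> y' = y) > 0 \<longrightarrow>
         ln (Prob3 m (N m) (n m) (unif m) (qdist m \<epsilon> \<omega>) (qdist m \<epsilon> \<omega>)
               (\<lambda>x' y' z. x' = x \<and> y' = y \<and> eventB x' y' z)
             / Prob3 m (N m) (n m) (unif m) (qdist m \<epsilon> \<omega>) (qdist m \<epsilon> \<omega>)
               (\<lambda>x' y' z. x' = x \<and> y' = y))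
         \<ge> - 5 * ((real (N m) * real (n m) + real (n m) ^ 2) / real m) * (1 + \<delta> m))))"
proof -
  have e1: "\<forall>\<^sub>F m in sequentially. real (N m) / real m < 1/30"
    by (rule order_tendstoD(2)[OF assms(5)]) simp
  have e2: "\<forall>\<^sub>F m in sequentially. real (n m) / real m < 1/30"
    by (rule order_tendstoD(2)[OF assms(6)]) simp
  have e3: "\<forall>\<^sub>F m in sequentially. 0 < m" by (rule eventually_gt_at_top)
  have ev: "\<forall>\<^sub>F m in sequentially. 0 < m \<and> 10 * (2 * real (N m) + real (n m)) \<le> real m"
    using e1 e2 e3
  proof (eventually_elim)
    case (elim m)
    then have "real (N m) * 30 < real m" "real (n m) * 30 < real m" by (simp_all add: field_simps)
    then show ?case using elim(3) by (intro conjI) (simp, smt (verit))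
  qed
  show ?thesis
  proof (intro exI[of _ "\<lambda>_. 0"] conjI tendsto_const)
    show "\<forall>\<^sub>F m in sequentially. even m \<longrightarrow>
      (\<forall>\<omega> \<in> Kset m. \<forall>x \<in> seqs m (N m). \<forall>y \<in> seqs m (N m).
        (Prob3 m (N m) (n m) (unif m) (qdist m \<epsilon> \<omega>) (unif m)
            (\<lambda>x' y' z. x' = x \<and> y' = y) > 0 \<longrightarrow>
         ln (Prob3 m (N m) (n m) (unif m) (qdist m \<epsilon> \<omega>) (unif m)
               (\<lambda>x' y' z. x' = x \<and> y' = y \<and> eventB x' y' z)
             / Prob3 m (N m) (n m) (unif m) (qdist m \<epsilon> \<omega>) (unif m)
               (\<lambda>x' y' z. x' = x \<and> y' = y))
         \<ge> - 5 * ((real (N m) * real (n m) + real (n m) ^ 2) / real m) * (1 + 0))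
      \<and> (Prob3 m (N m) (n m) (unif m) (qdist m \<epsilon> \<omega>) (qdist m \<epsilon> \<omega>)
            (\<lambda>x' y' z. x' = x \<and> y' = y) > 0 \<longrightarrow>
         ln (Prob3 m (N m) (n m) (unif m) (qdist m \<epsilon> \<omega>) (qdist m \<epsilon> \<omega>)
               (\<lambda>x' y' z. x' = x \<and> y' = y \<and> eventB x' y' z)
             / Prob3 m (N m) (n m) (unif m) (qdist m \<epsilon> \<omega>) (qdist m \<epsilon> \<omega>)
               (\<lambda>x' y' z. x' = x \<and> y' = y))
         \<ge> - 5 * ((real (N m) * real (n m) + real (n m) ^ 2) / real m) * (1 + 0)))"
      using ev
    proof (eventually_elim, intro impI ballI conjI)
      fix m \<omega> x y
      assume H: "0 < m \<and> 10 * (2 * real (N m) + real (n m)) \<le> real m" and ev: "even m"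
        and w: "\<omega> \<in> Kset m" and x: "x \<in> seqs m (N m)" and y: "y \<in> seqs m (N m)"
      have cu: "0 \<le> unif m j \<and> unif m j \<le> 2 / real m" for j
        by (simp add: unif_def divide_right_mono)
      have cq: "0 \<le> qdist m \<epsilon> \<omega> j \<and> qdist m \<epsilon> \<omega> j \<le> 2 / real m" for j
        using assms(1,2) by (simp add: qdist_def divide_right_mono)
      {
        assume p: "Prob3 m (N m) (n m) (unif m) (qdist m \<epsilon> \<omega>) (unif m) (\<lambda>x' y' z. x' = x \<and> y' = y) > 0"
        show "ln (Prob3 m (N m) (n m) (unif m) (qdist m \<epsilon> \<omega>) (unif m)
               (\<lambda>x' y' z. x' = x \<and> y' = y \<and> eventB x' y' z)
             / Prob3 m (N m) (n m) (unif m) (qdist m \<epsilon> \<omega>) (unif m)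
               (\<lambda>x' y' z. x' = x \<and> y' = y))
         \<ge> - 5 * ((real (N m) * real (n m) + real (n m) ^ 2) / real m) * (1 + 0)"
          using ratio_bound[OF _ cu unif_total x y _ p] H by simp
      next
        assume p: "Prob3 m (N m) (n m) (unif m) (qdist m \<epsilon> \<omega>) (qdist m \<epsilon> \<omega>) (\<lambda>x' y' z. x' = x \<and> y' = y) > 0"
        show "ln (Prob3 m (N m) (n m) (unif m) (qdist m \<epsilon> \<omega>) (qdist m \<epsilon> \<omega>)
               (\<lambda>x' y' z. x' = x \<and> y' = y \<and> eventB x' y' z)
             / Prob3 m (N m) (n m) (unif m) (qdist m \<epsilon> \<omega>) (qdist m \<epsilon> \<omega>)
               (\<lambda>x' y' z. x' = x \<and> y' = y))
         \<ge> - 5 * ((real (N m) * real (n m) + real (n m) ^ 2) / real m) * (1 + 0)"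
          using ratio_bound[OF _ cq qdist_total[OF ev w conjunct1[OF H]] x y _ p] H by simp
      }
    qed
  qed
qed

end
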